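(* Let $a,d\in\mathbb{N}$ and $m,n\in\mathbb{N}$ with $m,n\ge 2$. Let $X_1,\dots,X_m$ be i.i.d. random variables uniformly distributed on $\{1,\dots,a\}$ and $Y_1,\dots,Y_n$ i.i.d. random variables uniformly distributed on $\{1,\dots,d\}$, independent of the $X_i$. Let $X^{(1)}\ge X^{(2)}$ be the largest and second largest values among $X_1,\dots,X_m$ (counted with multiplicity), and similarly $Y^{(1)}\ge Y^{(2)}$ among $Y_1,\dots,Y_n$. Then \begin{align*} \Pr\left(X^{(1)}>Y^{(1)}\text{ and }X^{(2)}>Y^{(2)}\right) &= \sum_{y_1=2}^{\min \{a,d\} } \sum_{y_2=1}^{y_{1}-1} \frac{n\big(y_2^{n-1}-(y_2-1)^{n-1}\big)\big(a^m-y_1^m-m(a-y_1)y_2^{m-1}\big)}{a^m d^n} \\ & \quad + \sum_{y_{1}=1}^{\min\{a,d\}}\frac{\big( y_1^n-(y_1-1)^{n}-n(y_1-1)^{n-1} \big) \big(a^m+(m-1)y_1^m-am\,y_1^{m-1} \big)}{a^m d^n}. \end{align*}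
   Context: $X^{(i)}$ denotes the $i$-th largest of the dice values (order statistics, so if the two largest values are equal then $X^{(1)}=X^{(2)}$). In the paper's notation the event is $\{X_i\}_m>_{2,2}\{Y_j\}_n$: both of the comparisons $X^{(1)}>Y^{(1)}$, $X^{(2)}>Y^{(2)}$ hold (ties go to the defender). *)

theory Defs
  imports "HOL-Probability.Probability"
begin

definition ostat :: "nat \<Rightarrow> (nat \<Rightarrow> nat) \<Rightarrow> nat \<Rightarrow> nat" where
  "ostat k x i = rev (sort (map x [1..<k+1])) ! (i - 1)"

text \<open>Joint outcome space of (X_1..X_m, Y_1..Y_n); i.i.d. uniform dice, independent,
  is exactly the uniform distribution on this finite product set.\<close>
definition dice_space :: "nat \<Rightarrow> nat \<Rightarrow> nat \<Rightarrow> nat \<Rightarrow> ((nat \<Rightarrow> nat) \<times> (nat \<Rightarrow> nat)) set" where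
  "dice_space a m d n = ({1..m} \<rightarrow>\<^sub>E {1..a}) \<times> ({1..n} \<rightarrow>\<^sub>E {1..d})"

end

theory Submission
  imports Defs
begin

lemma sorted_desc_nth:
  fixes L :: "nat list"
  assumes "sorted_wrt (\<ge>) L" "k < length L"
  shows "(t < L!k) \<longleftrightarrow> k < length (filter (\<lambda>z. t<z) L)"
  using assms
proof (induction L arbitrary: k)
  case Nil then show ?case by simp
next
  case (Cons z L)
  show ?case
  proof (cases "t < z")
    case True
    then show ?thesis using Cons by (cases k) auto
  next
    case False
    then have "filter (\<lambda>z. t<z) (z#L) = []" using Cons.prems(1) by (auto simp: filter_empty_conv)
    moreover have "(z#L)!k \<le> z" using Cons.prems by (cases k) auto
    ultimately show ?thesis using False by simp
  qed
qed

lemma len_filter_rev_sort: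
  fixes xs :: "nat list"
  shows "length (filter P (rev (sort xs))) = length (filter P xs)"
  by (metis mset_filter mset_rev mset_sort size_mset)

lemma ostat_gt:
  assumes "1 \<le> j" "j \<le> k"
  shows "(t < ostat k x j) \<longleftrightarrow> j \<le> card {i\<in>{1..k}. t < x i}"
proof -
  let ?L = "rev (sort (map x [1..<k+1]))"
  have s: "sorted_wrt (\<ge>) ?L"
    using sorted_sort[of "map x [1..<k+1]"] by (simp add: sorted_wrt_rev)
  have l: "length ?L = k" by simp
  have "(t < ostat k x j) \<longleftrightarrow> j - 1 < length (filter (\<lambda>z. t<z) ?L)"
    unfolding ostat_def using sorted_desc_nth[OF s, of "j-1" t] assms l by simp
  also have "length (filter (\<lambda>z. t<z) ?L) = length (filter (\<lambda>z. t<z) (map x [1..<k+1]))"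
    by (rule len_filter_rev_sort)
  also have "\<dots> = length (filter (\<lambda>i. t < x i) [1..<k+1])"
    by (simp add: filter_map o_def)
  also have "\<dots> = card {i\<in>{1..k}. t < x i}"
    by (subst distinct_length_filter) (auto intro: arg_cong[where f=card])
  finally show ?thesis using assms by linarith
qed

lemma card_ge2_iff: "finite A \<Longrightarrow> 2 \<le> card A \<longleftrightarrow> (\<exists>i\<in>A. \<exists>j\<in>A. i \<noteq> j)"
  by (metis One_nat_def card_1_singletonE card_gt_0_iff card_le_Suc0_iff_eq
        insert_iff le_antisym not_less_eq_eq numerals(2) singletonD)

lemma ostat1_le: "1 \<le> k \<Longrightarrow> ostat k x 1 \<le> t \<longleftrightarrow> (\<forall>i\<in>{1..k}. x i \<le> t)"
proof -
  assume k: "1 \<le> k"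
  have "ostat k x 1 \<le> t \<longleftrightarrow> \<not> 1 \<le> card {i\<in>{1..k}. t < x i}"
    using ostat_gt[of 1 k t x] k by (auto simp flip: not_le)
  also have "\<dots> \<longleftrightarrow> card {i\<in>{1..k}. t < x i} = 0" by linarith
  also have "\<dots> \<longleftrightarrow> {i\<in>{1..k}. t < x i} = {}"
    by (rule card_0_eq) auto
  also have "\<dots> \<longleftrightarrow> (\<forall>i\<in>{1..k}. x i \<le> t)" by (auto simp: not_less)
  finally show ?thesis .
qed

lemma ostat2_le: "2 \<le> k \<Longrightarrow> ostat k x 2 \<le> t \<longleftrightarrow> \<not>(\<exists>i\<in>{1..k}. \<exists>j\<in>{1..k}. i\<noteq>j \<and> t<x i \<and> t<x j)"
proof -
  assume k: "2 \<le> k"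
  have "ostat k x 2 \<le> t \<longleftrightarrow> \<not> 2 \<le> card {i\<in>{1..k}. t < x i}"
    using ostat_gt[of 2 k t x] k by (auto simp flip: not_le)
  also have "\<dots> \<longleftrightarrow> \<not>(\<exists>i\<in>{i\<in>{1..k}. t < x i}. \<exists>j\<in>{i\<in>{1..k}. t < x i}. i \<noteq> j)"
    by (subst card_ge2_iff) auto
  also have "\<dots> \<longleftrightarrow> \<not>(\<exists>i\<in>{1..k}. \<exists>j\<in>{1..k}. i\<noteq>j \<and> t<x i \<and> t<x j)" by blast
  finally show ?thesis .
qed

lemma ostat21: "2 \<le> k \<Longrightarrow> ostat k x 2 \<le> ostat k x 1"
  using ostat_gt[of 2 k "ostat k x 1" x] ostat_gt[of 1 k "ostat k x 1" x] by linarith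

lemma count_L:
  fixes I :: "nat set" and p q top :: nat
  assumes fin: "finite I" and qp: "q \<le> p" and pt: "p \<le> top"
  shows "card {x \<in> PiE I (\<lambda>_. {1..top}). (\<forall>i\<in>I. x i \<le> p) \<and> \<not>(\<exists>i\<in>I. \<exists>j\<in>I. i\<noteq>j \<and> q<x i \<and> q<x j)}
         = q ^ card I + card I * (p - q) * q ^ (card I - 1)"
proof -
  define A0 where "A0 = PiE I (\<lambda>_. {1..q})"
  define B where "B i = PiE I (\<lambda>j. if j = i then {q<..p} else {1..q})" for i
  have eq: "{x \<in> PiE I (\<lambda>_. {1..top}). (\<forall>i\<in>I. x i \<le> p) \<and> \<not>(\<exists>i\<in>I. \<exists>j\<in>I. i\<noteq>j \<and> q<x i \<and> q<x j)}
     = A0 \<union> (\<Union>i\<in>I. B i)"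
  proof (intro equalityI subsetI)
    fix x assume x: "x \<in> {x \<in> PiE I (\<lambda>_. {1..top}). (\<forall>i\<in>I. x i \<le> p) \<and> \<not>(\<exists>i\<in>I. \<exists>j\<in>I. i\<noteq>j \<and> q<x i \<and> q<x j)}"
    show "x \<in> A0 \<union> (\<Union>i\<in>I. B i)"
    proof (cases "\<forall>i\<in>I. x i \<le> q")
      case True
      then have "x \<in> A0" using x unfolding A0_def by (auto simp: PiE_iff)
      then show ?thesis by blast
    next
      case False
      then obtain i where i: "i \<in> I" "q < x i" by (auto simp: not_le)
      have o: "\<forall>j\<in>I. j \<noteq> i \<longrightarrow> x j \<le> q"
      proof (intro ballI impI)
        fix j assume j: "j \<in> I" "j \<noteq> i"
        have "\<not>(i\<noteq>j \<and> q<x i \<and> q<x j)" using x i j by blast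
        then show "x j \<le> q" using i j by auto
      qed
      have "x \<in> B i" using x i o unfolding B_def by (auto simp: PiE_iff)
      then show ?thesis using i by blast
    qed
  next
    fix x assume x: "x \<in> A0 \<union> (\<Union>i\<in>I. B i)"
    then show "x \<in> {x \<in> PiE I (\<lambda>_. {1..top}). (\<forall>i\<in>I. x i \<le> p) \<and> \<not>(\<exists>i\<in>I. \<exists>j\<in>I. i\<noteq>j \<and> q<x i \<and> q<x j)}"
    proof
      assume "x \<in> A0"
      then have a: "\<forall>i\<in>I. 1 \<le> x i \<and> x i \<le> q" and e: "x \<in> extensional I"
        unfolding A0_def by (auto simp: PiE_iff)
      have "x \<in> PiE I (\<lambda>_. {1..top})" using a e qp pt by (auto simp: PiE_iff)
      moreover have "\<forall>i\<in>I. x i \<le> p" using a qp by auto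
      moreover have "\<not>(\<exists>i\<in>I. \<exists>j\<in>I. i\<noteq>j \<and> q<x i \<and> q<x j)" using a by auto
      ultimately show ?thesis by blast
    next
      assume "x \<in> (\<Union>i\<in>I. B i)"
      then obtain i where i: "i \<in> I" "x \<in> B i" by blast
      then have xi: "\<forall>j\<in>I. j \<noteq> i \<longrightarrow> x j \<le> q" unfolding B_def by (auto simp: PiE_iff)
      have a: "1 \<le> x i \<and> x i \<le> p" and a2: "\<forall>j\<in>I. j\<noteq>i \<longrightarrow> 1 \<le> x j \<and> x j \<le> q" and e: "x \<in> extensional I"
        using i unfolding B_def by (auto simp: PiE_iff)
      have "x \<in> PiE I (\<lambda>_. {1..top})" using a a2 e qp pt i by (auto simp: PiE_iff)
      moreover have "\<forall>j\<in>I. x j \<le> p" using a a2 qp by auto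
      moreover have "\<not>(\<exists>i'\<in>I. \<exists>j\<in>I. i'\<noteq>j \<and> q<x i' \<and> q<x j)" using a2 by (metis not_le)
      ultimately show ?thesis by blast
    qed
  qed
  have finB: "finite (B i)" for i unfolding B_def using fin by (simp add: finite_PiE)
  have finA0: "finite A0" unfolding A0_def using fin by (simp add: finite_PiE)
  have dis1: "A0 \<inter> (\<Union>i\<in>I. B i) = {}"
  proof -
    have "A0 \<inter> B i = {}" if "i \<in> I" for i
    proof (rule ccontr)
      assume "A0 \<inter> B i \<noteq> {}"
      then obtain x where "x \<in> A0" "x \<in> B i" by blast
      then have "x i \<in> {1..q}" "x i \<in> {q<..p}" using that unfolding A0_def B_def
        by (auto dest: PiE_mem[where x=i])
      then show False by auto
    qed
    then show ?thesis by blast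
  qed
  have dis2: "\<forall>i\<in>I. \<forall>j\<in>I. i \<noteq> j \<longrightarrow> B i \<inter> B j = {}"
  proof (intro ballI impI)
    fix i j assume "i \<in> I" "j \<in> I" "i \<noteq> j"
    show "B i \<inter> B j = {}"
    proof (rule ccontr)
      assume "B i \<inter> B j \<noteq> {}"
      then obtain x where "x \<in> B i" "x \<in> B j" by blast
      then have "x j \<in> {1..q}" "x j \<in> {q<..p}" using \<open>i \<noteq> j\<close> \<open>j \<in> I\<close> unfolding B_def
        by (auto dest: PiE_mem[where x=j])
      then show False by auto
    qed
  qed
  have cB: "card (B i) = (p - q) * q ^ (card I - 1)" if "i \<in> I" for i
  proof -
    have "card (B i) = (\<Prod>j\<in>I. card (if j = i then {q<..p} else {1..q}))"
      unfolding B_def by (simp add: card_PiE fin)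
    also have "\<dots> = card {q<..p} * (\<Prod>j\<in>I - {i}. card (if j = i then {q<..p} else {1..q}))"
      using that fin by (simp add: prod.remove)
    also have "(\<Prod>j\<in>I - {i}. card (if j = i then {q<..p} else {1..q})) = (\<Prod>j\<in>I - {i}. q)"
      by (rule prod.cong) auto
    also have "\<dots> = q ^ (card I - 1)" using that fin by (simp add: card_Diff_singleton)
    finally show ?thesis by simp
  qed
  have cA0: "card A0 = q ^ card I" unfolding A0_def by (simp add: card_PiE fin)
  have "card (A0 \<union> (\<Union>i\<in>I. B i)) = card A0 + card (\<Union>i\<in>I. B i)"
    using dis1 finA0 finB fin by (simp add: card_Un_disjoint)
  also have "card (\<Union>i\<in>I. B i) = (\<Sum>i\<in>I. card (B i))"
    using dis2 finB fin by (simp add: card_UN_disjoint)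
  also have "\<dots> = (\<Sum>i\<in>I. (p - q) * q ^ (card I - 1))" using cB by simp
  finally show ?thesis using eq cA0 by simp
qed

lemma count_S:
  assumes k: "2 \<le> k" and qp: "q \<le> p" and pt: "p \<le> tp"
  shows "real (card {x \<in> {1..k} \<rightarrow>\<^sub>E {1..tp}. ostat k x 1 \<le> p \<and> ostat k x 2 \<le> q})
       = real q ^ k + real k * (real p - real q) * real q ^ (k - 1)"
proof -
  have "{x \<in> {1..k} \<rightarrow>\<^sub>E {1..tp}. ostat k x 1 \<le> p \<and> ostat k x 2 \<le> q}
      = {x \<in> {1..k} \<rightarrow>\<^sub>E {1..tp}. (\<forall>i\<in>{1..k}. x i \<le> p) \<and> \<not>(\<exists>i\<in>{1..k}. \<exists>j\<in>{1..k}. i\<noteq>j \<and> q<x i \<and> q<x j)}"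
    using ostat1_le[of k] ostat2_le[OF k] k by simp
  also have "card \<dots> = q ^ k + k * (p - q) * q ^ (k - 1)"
    using count_L[of "{1..k}" q p tp] qp pt by simp
  finally show ?thesis using qp by (simp add: of_nat_diff)
qed

lemma ostat_bounds:
  assumes k: "2 \<le> k" and x: "x \<in> {1..k} \<rightarrow>\<^sub>E {1..tp}"
  shows "ostat k x 1 \<le> tp" "1 \<le> ostat k x 2"
proof -
  show "ostat k x 1 \<le> tp" using ostat1_le[of k x tp] k x by (auto simp: PiE_iff)
  have "1 \<in> {1..k}" "2 \<in> {1..k}" using k by auto
  then have "x 1 \<in> {1..tp}" "x 2 \<in> {1..tp}" using x by (auto dest: PiE_mem)
  then have "0 < x 1" "0 < x 2" by auto
  then have "\<not> ostat k x 2 \<le> 0" using ostat2_le[OF k, of x 0] k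
    by (metis \<open>1 \<in> {1..k}\<close> \<open>2 \<in> {1..k}\<close> numeral_One numeral_eq_iff semiring_norm(85))
  then show "1 \<le> ostat k x 2" by simp
qed

lemma countX:
  assumes m: "2 \<le> m" and vu: "v \<le> u" and ua: "u \<le> a"
  shows "real (card {x \<in> {1..m} \<rightarrow>\<^sub>E {1..a}. u < ostat m x 1 \<and> v < ostat m x 2})
     = real a ^ m - real u ^ m - real m * (real a - real u) * real v ^ (m - 1)"
proof -
  define P where "P = {1..m} \<rightarrow>\<^sub>E {1..a}"
  define F where "F = {x \<in> P. u < ostat m x 1 \<and> v < ostat m x 2}"
  define A where "A = {x \<in> P. ostat m x 1 \<le> u}"
  define B where "B = {x \<in> P. ostat m x 2 \<le> v}"
  have finP: "finite P" unfolding P_def by (simp add: finite_PiE)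
  have "P = F \<union> (A \<union> B)" unfolding F_def A_def B_def by auto
  moreover have "F \<inter> (A \<union> B) = {}" unfolding F_def A_def B_def by auto
  ultimately have c1: "card P = card F + card (A \<union> B)"
    using finP by (metis card_Un_disjoint finite_Un)
  have c2: "card (A \<union> B) + card (A \<inter> B) = card A + card B"
    using card_Un_Int[of A B] finP by (simp add: A_def B_def)
  have "A = {x \<in> P. ostat m x 1 \<le> u \<and> ostat m x 2 \<le> u}"
    unfolding A_def using ostat21[OF m] le_trans by blast
  then have cA: "real (card A) = real u ^ m" using count_S[OF m order.refl ua] unfolding P_def by simp
  have "B = {x \<in> P. ostat m x 1 \<le> a \<and> ostat m x 2 \<le> v}"
    unfolding B_def P_def using ostat_bounds[OF m] by blast
  then have cB: "real (card B) = real v ^ m + real m * (real a - real v) * real v ^ (m - 1)"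
    using count_S[OF m _ order.refl, of v a] vu ua unfolding P_def by simp
  have "A \<inter> B = {x \<in> P. ostat m x 1 \<le> u \<and> ostat m x 2 \<le> v}" unfolding A_def B_def by auto
  then have cAB: "real (card (A \<inter> B)) = real v ^ m + real m * (real u - real v) * real v ^ (m - 1)"
    using count_S[OF m vu ua] unfolding P_def by simp
  have cP: "real (card P) = real a ^ m" unfolding P_def by (simp add: card_PiE)
  have "real (card F) = real (card P) - (real (card A) + real (card B) - real (card (A \<inter> B)))"
    using c1 c2 by (metis (mono_tags, opaque_lifting) add_diff_cancel_right' diff_add_cancel of_nat_add)
  also have "\<dots> = real a ^ m - real u ^ m - real m * (real a - real u) * real v ^ (m - 1)"
    unfolding cP cA cB cAB by (simp add: algebra_simps)
  finally show ?thesis unfolding F_def P_def .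
qed

lemma incl_excl:
  fixes f g :: "'a \<Rightarrow> nat"
  assumes fin: "finite Q" and u: "1 \<le> u" and v: "1 \<le> v"
  shows "real (card {y\<in>Q. f y = u \<and> g y = v}) =
     real (card {y\<in>Q. f y \<le> u \<and> g y \<le> v}) - real (card {y\<in>Q. f y \<le> u - 1 \<and> g y \<le> v})
     - real (card {y\<in>Q. f y \<le> u \<and> g y \<le> v - 1}) + real (card {y\<in>Q. f y \<le> u - 1 \<and> g y \<le> v - 1})"
proof -
  define S where "S p q = {y\<in>Q. f y \<le> p \<and> g y \<le> q}" for p q
  have finS: "finite (S p q)" for p q unfolding S_def using fin by simp
  have e: "{y\<in>Q. f y = u \<and> g y = v} = S u v - (S (u-1) v \<union> S u (v-1))"
    unfolding S_def using u v by auto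
  have sub: "S (u-1) v \<union> S u (v-1) \<subseteq> S u v" unfolding S_def by auto
  have i: "S (u-1) v \<inter> S u (v-1) = S (u-1) (v-1)" unfolding S_def by auto
  have c1: "card (S u v - (S (u-1) v \<union> S u (v-1))) + card (S (u-1) v \<union> S u (v-1)) = card (S u v)"
    using card_Diff_subset[OF finite_subset[OF sub finS] sub] card_mono[OF finS sub] by simp
  have c2: "card (S (u-1) v \<union> S u (v-1)) + card (S (u-1) (v-1)) = card (S (u-1) v) + card (S u (v-1))"
    using card_Un_Int[OF finS finS] i by simp
  have "real (card (S u v - (S (u-1) v \<union> S u (v-1)))) = real (card (S u v)) - real (card (S (u-1) v)) - real (card (S u (v-1))) + real (card (S (u-1) (v-1)))"
    using arg_cong[OF c1, of real] arg_cong[OF c2, of real] by simp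
  then show ?thesis unfolding e by (simp add: S_def)
qed

lemma countY1:
  assumes n: "2 \<le> n" and v: "1 \<le> v" and vu: "v < u" and ud: "u \<le> d"
  shows "real (card {y \<in> {1..n} \<rightarrow>\<^sub>E {1..d}. ostat n y 1 = u \<and> ostat n y 2 = v})
     = real n * (real v ^ (n - 1) - (real v - 1) ^ (n - 1))"
proof -
  have fin: "finite ({1..n} \<rightarrow>\<^sub>E {1..d})" by (simp add: finite_PiE)
  have u1: "1 \<le> u" using v vu by simp
  have r1: "real (u - 1) = real u - 1" "real (v - 1) = real v - 1" using u1 v by (simp_all add: of_nat_diff)
  have c1: "real (card {y \<in> {1..n} \<rightarrow>\<^sub>E {1..d}. ostat n y 1 \<le> u \<and> ostat n y 2 \<le> v}) = real v ^ n + real n * (real u - real v) * real v ^ (n - 1)"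
    using count_S[OF n, of v u d] vu ud by simp
  have c2: "real (card {y \<in> {1..n} \<rightarrow>\<^sub>E {1..d}. ostat n y 1 \<le> u - 1 \<and> ostat n y 2 \<le> v}) = real v ^ n + real n * ((real u - 1) - real v) * real v ^ (n - 1)"
    using count_S[OF n, of v "u-1" d] vu ud r1 by simp
  have c3: "real (card {y \<in> {1..n} \<rightarrow>\<^sub>E {1..d}. ostat n y 1 \<le> u \<and> ostat n y 2 \<le> v - 1}) = (real v - 1) ^ n + real n * (real u - (real v - 1)) * (real v - 1) ^ (n - 1)"
    using count_S[OF n, of "v-1" u d] vu ud r1 by simp
  have c4: "real (card {y \<in> {1..n} \<rightarrow>\<^sub>E {1..d}. ostat n y 1 \<le> u - 1 \<and> ostat n y 2 \<le> v - 1}) = (real v - 1) ^ n + real n * ((real u - 1) - (real v - 1)) * (real v - 1) ^ (n - 1)"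
    using count_S[OF n, of "v-1" "u-1" d] vu ud r1 by simp
  have ie: "real (card {y \<in> {1..n} \<rightarrow>\<^sub>E {1..d}. ostat n y 1 = u \<and> ostat n y 2 = v}) =
     (real v ^ n + real n * (real u - real v) * real v ^ (n - 1))
     - (real v ^ n + real n * ((real u - 1) - real v) * real v ^ (n - 1))
     - ((real v - 1) ^ n + real n * (real u - (real v - 1)) * (real v - 1) ^ (n - 1))
     + ((real v - 1) ^ n + real n * ((real u - 1) - (real v - 1)) * (real v - 1) ^ (n - 1))"
    using incl_excl[OF fin u1 v, of "\<lambda>y. ostat n y 1" "\<lambda>y. ostat n y 2"] unfolding c1 c2 c3 c4 .
  show ?thesis unfolding ie by (simp add: algebra_simps)
qed

lemma countY2:
  assumes n: "2 \<le> n" and u1: "1 \<le> u" and ud: "u \<le> d"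
  shows "real (card {y \<in> {1..n} \<rightarrow>\<^sub>E {1..d}. ostat n y 1 = u \<and> ostat n y 2 = u})
     = real u ^ n - (real u - 1) ^ n - real n * (real u - 1) ^ (n - 1)"
proof -
  have fin: "finite ({1..n} \<rightarrow>\<^sub>E {1..d})" by (simp add: finite_PiE)
  have r1: "real (u - 1) = real u - 1" using u1 by (simp_all add: of_nat_diff)
  have e: "{y \<in> {1..n} \<rightarrow>\<^sub>E {1..d}. ostat n y 1 \<le> u - 1 \<and> ostat n y 2 \<le> u}
      = {y \<in> {1..n} \<rightarrow>\<^sub>E {1..d}. ostat n y 1 \<le> u - 1 \<and> ostat n y 2 \<le> u - 1}"
    using u1 by (auto intro: le_trans[OF ostat21[OF n]])
  have c1: "real (card {y \<in> {1..n} \<rightarrow>\<^sub>E {1..d}. ostat n y 1 \<le> u \<and> ostat n y 2 \<le> u}) = real u ^ n"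
    using count_S[OF n, of u u d] ud by simp
  have c3: "real (card {y \<in> {1..n} \<rightarrow>\<^sub>E {1..d}. ostat n y 1 \<le> u \<and> ostat n y 2 \<le> u - 1}) = (real u - 1) ^ n + real n * (real u - (real u - 1)) * (real u - 1) ^ (n - 1)"
    using count_S[OF n, of "u-1" u d] ud r1 by simp
  have ie: "real (card {y \<in> {1..n} \<rightarrow>\<^sub>E {1..d}. ostat n y 1 = u \<and> ostat n y 2 = u}) =
     real u ^ n - real (card {y \<in> {1..n} \<rightarrow>\<^sub>E {1..d}. ostat n y 1 \<le> u - 1 \<and> ostat n y 2 \<le> u - 1})
     - ((real u - 1) ^ n + real n * (real u - (real u - 1)) * (real u - 1) ^ (n - 1))
     + real (card {y \<in> {1..n} \<rightarrow>\<^sub>E {1..d}. ostat n y 1 \<le> u - 1 \<and> ostat n y 2 \<le> u - 1})"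
    using incl_excl[OF fin u1 u1, of "\<lambda>y. ostat n y 1" "\<lambda>y. ostat n y 2"] unfolding e c1 c3 .
  show ?thesis unfolding ie by (simp add: algebra_simps)
qed

theorem proposition6p3:
  fixes a d m n :: nat
  assumes "a \<ge> 1" and "d \<ge> 1" and "m \<ge> 2" and "n \<ge> 2"
  shows "measure_pmf.prob (pmf_of_set (dice_space a m d n))
      {(x, y). ostat m x 1 > ostat n y 1 \<and> ostat m x 2 > ostat n y 2}
    = (\<Sum>y1 = 2..min a d. \<Sum>y2 = 1..y1 - 1.
          real n * (real y2 ^ (n - 1) - (real y2 - 1) ^ (n - 1))
          * (real a ^ m - real y1 ^ m - real m * (real a - real y1) * real y2 ^ (m - 1))
          / (real a ^ m * real d ^ n))
    + (\<Sum>y1 = 1..min a d.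
          (real y1 ^ n - (real y1 - 1) ^ n - real n * (real y1 - 1) ^ (n - 1))
          * (real a ^ m + (real m - 1) * real y1 ^ m - real a * real m * real y1 ^ (m - 1))
          / (real a ^ m * real d ^ n))"
proof -
  note a = assms(1) and d = assms(2) and m = assms(3) and n = assms(4)
  define P where "P = {1..m} \<rightarrow>\<^sub>E {1..a}"
  define Q where "Q = {1..n} \<rightarrow>\<^sub>E {1..d}"
  define E where "E = {(x, y). ostat m x 1 > ostat n y 1 \<and> ostat m x 2 > ostat n y 2}"
  define G where "G u v = real (card {x\<in>P. u < ostat m x 1 \<and> v < ostat m x 2})" for u v
  define NY where "NY u v = real (card {y\<in>Q. ostat n y 1 = u \<and> ostat n y 2 = v})" for u v
  define T1 where "T1 y1 y2 = real n * (real y2 ^ (n - 1) - (real y2 - 1) ^ (n - 1))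
          * (real a ^ m - real y1 ^ m - real m * (real a - real y1) * real y2 ^ (m - 1))" for y1 y2 :: nat
  define T2 where "T2 y1 = (real y1 ^ n - (real y1 - 1) ^ n - real n * (real y1 - 1) ^ (n - 1))
          * (real a ^ m + (real m - 1) * real y1 ^ m - real a * real m * real y1 ^ (m - 1))" for y1 :: nat
  define D where "D = real a ^ m * real d ^ n"
  have S: "dice_space a m d n = P \<times> Q" by (simp add: dice_space_def P_def Q_def)
  have finP: "finite P" and finQ: "finite Q" by (simp_all add: P_def Q_def finite_PiE)
  have "(\<lambda>i\<in>{1..m}. 1) \<in> P" "(\<lambda>i\<in>{1..n}. 1) \<in> Q" using a d by (auto simp: P_def Q_def)
  then have ne: "P \<times> Q \<noteq> {}" by blast
  have prob: "measure_pmf.prob (pmf_of_set (P \<times> Q)) E = real (card (P \<times> Q \<inter> E)) / real (card (P \<times> Q))"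
    using measure_pmf_of_set[OF ne] finP finQ by simp
  have cPQ: "real (card (P \<times> Q)) = D"
    by (simp add: card_cartesian_product P_def Q_def card_PiE D_def)
  have sw: "P \<times> Q \<inter> E = (\<lambda>(y,x). (x,y)) ` (SIGMA y:Q. {x\<in>P. ostat n y 1 < ostat m x 1 \<and> ostat n y 2 < ostat m x 2})"
    unfolding E_def by auto
  have inj: "inj_on (\<lambda>(y,x). (x,y)) A" for A :: "((nat \<Rightarrow> nat) \<times> (nat \<Rightarrow> nat)) set"
    by (auto simp: inj_on_def)
  have "real (card (P \<times> Q \<inter> E)) = (\<Sum>y\<in>Q. G (ostat n y 1) (ostat n y 2))"
    unfolding sw card_image[OF inj] G_def using finP finQ by simp
  define Tset where "Tset = (SIGMA u:{1..d}. {1..u})"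
  have img: "(\<lambda>y. (ostat n y 1, ostat n y 2)) ` Q \<subseteq> Tset"
  proof (rule image_subsetI)
    fix y assume y: "y \<in> Q"
    have "ostat n y 1 \<le> d" "1 \<le> ostat n y 2" using ostat_bounds[OF n, of y d] y unfolding Q_def by auto
    moreover have "ostat n y 2 \<le> ostat n y 1" by (rule ostat21[OF n])
    ultimately show "(ostat n y 1, ostat n y 2) \<in> Tset" unfolding Tset_def by auto
  qed
  have "(\<Sum>y\<in>Q. G (ostat n y 1) (ostat n y 2))
      = (\<Sum>p\<in>Tset. \<Sum>y\<in>{y. y \<in> Q \<and> (ostat n y 1, ostat n y 2) = p}. G (ostat n y 1) (ostat n y 2))"
    by (rule sum.group[symmetric]) (use finQ img in \<open>auto simp: Tset_def\<close>)
  also have "\<dots> = (\<Sum>p\<in>Tset. NY (fst p) (snd p) * G (fst p) (snd p))"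
  proof (rule sum.cong[OF refl])
    fix p assume "p \<in> Tset"
    have "(\<Sum>y\<in>{y. y \<in> Q \<and> (ostat n y 1, ostat n y 2) = p}. G (ostat n y 1) (ostat n y 2))
       = (\<Sum>y\<in>{y. y \<in> Q \<and> (ostat n y 1, ostat n y 2) = p}. G (fst p) (snd p))"
      by (rule sum.cong) auto
    also have "\<dots> = NY (fst p) (snd p) * G (fst p) (snd p)"
      unfolding NY_def by (simp add: prod_eq_iff conj_commute)
    finally show "(\<Sum>y\<in>{y. y \<in> Q \<and> (ostat n y 1, ostat n y 2) = p}. G (ostat n y 1) (ostat n y 2))
       = NY (fst p) (snd p) * G (fst p) (snd p)" .
  qed
  also have "\<dots> = (\<Sum>u=1..d. \<Sum>v=1..u. NY u v * G u v)"
    unfolding Tset_def by (simp add: sum.Sigma split_def)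
  also have "\<dots> = (\<Sum>u=1..min a d. \<Sum>v=1..u. NY u v * G u v)"
  proof (rule sum.mono_neutral_right)
    show "\<forall>u\<in>{1..d} - {1..min a d}. (\<Sum>v=1..u. NY u v * G u v) = 0"
    proof
      fix u assume u: "u \<in> {1..d} - {1..min a d}"
      have "G u v = 0" for v
      proof -
        have e0: "{x\<in>P. u < ostat m x 1 \<and> v < ostat m x 2} = {}"
        proof (rule ccontr)
          assume "{x\<in>P. u < ostat m x 1 \<and> v < ostat m x 2} \<noteq> {}"
          then obtain x where "x \<in> P" "u < ostat m x 1" by blast
          moreover have "ostat m x 1 \<le> a" using ostat_bounds(1)[OF m, of x a] \<open>x \<in> P\<close> unfolding P_def by simp
          ultimately show False using u by auto
        qed
        show ?thesis unfolding G_def e0 by simp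
      qed
      then show "(\<Sum>v=1..u. NY u v * G u v) = 0" by simp
    qed
  qed auto
  also have "\<dots> = (\<Sum>u=1..min a d. (\<Sum>v=1..u-1. T1 u v) + T2 u)"
  proof (rule sum.cong[OF refl])
    fix u assume u: "u \<in> {1..min a d}"
    then obtain w where w: "u = Suc w" by (cases u) auto
    have "(\<Sum>v=1..u. NY u v * G u v) = (\<Sum>v=1..w. NY u v * G u v) + NY u u * G u u"
      unfolding w by (simp add: sum.cl_ivl_Suc)
    also have "(\<Sum>v=1..w. NY u v * G u v) = (\<Sum>v=1..u-1. T1 u v)"
    proof (rule sum.cong)
      show "{1..w} = {1..u-1}" using w by simp
    next
      fix v assume v: "v \<in> {1..u-1}"
      have "NY u v = real n * (real v ^ (n - 1) - (real v - 1) ^ (n - 1))"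
        unfolding NY_def Q_def using countY1[OF n, of v u d] u v by auto
      moreover have "G u v = real a ^ m - real u ^ m - real m * (real a - real u) * real v ^ (m - 1)"
        unfolding G_def P_def using countX[OF m, of v u a] u v by auto
      ultimately show "NY u v * G u v = T1 u v" unfolding T1_def by simp
    qed
    also have "NY u u * G u u = T2 u"
    proof -
      have n1: "NY u u = real u ^ n - (real u - 1) ^ n - real n * (real u - 1) ^ (n - 1)"
        unfolding NY_def Q_def using countY2[OF n, of u d] u by auto
      have g1: "G u u = real a ^ m - real u ^ m - real m * (real a - real u) * real u ^ (m - 1)"
        unfolding G_def P_def using countX[OF m, of u u a] u by auto
      have pw: "real u ^ m = real u * real u ^ (m - 1)" using m
        by (metis Suc_diff_1 less_le_trans pos2 power_Suc)
      have g2: "G u u = real a ^ m + (real m - 1) * real u ^ m - real a * real m * real u ^ (m - 1)"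
        unfolding g1 pw by (simp add: algebra_simps)
      show ?thesis unfolding T2_def n1 g2 ..
    qed
    finally show "(\<Sum>v=1..u. NY u v * G u v) = (\<Sum>v=1..u-1. T1 u v) + T2 u" .
  qed
  finally have num: "real (card (P \<times> Q \<inter> E)) = (\<Sum>u=1..min a d. (\<Sum>v=1..u-1. T1 u v) + T2 u)" 
    using \<open>real (card (P \<times> Q \<inter> E)) = _\<close> by simp
  have s2: "(\<Sum>y1 = 2..min a d. \<Sum>y2 = 1..y1 - 1. T1 y1 y2 / D) = (\<Sum>y1 = 1..min a d. \<Sum>y2 = 1..y1 - 1. T1 y1 y2 / D)"
  proof -
    have "(\<Sum>y1 = 1..min a d. \<Sum>y2 = 1..y1 - 1. T1 y1 y2 / D) = (\<Sum>y2 = 1..1 - 1. T1 1 y2 / D) + (\<Sum>y1 = Suc 1..min a d. \<Sum>y2 = 1..y1 - 1. T1 y1 y2 / D)"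
      using a d by (intro sum.atLeast_Suc_atMost) auto
    then show ?thesis by (simp add: numeral_2_eq_2)
  qed
  show ?thesis
    unfolding S E_def[symmetric] prob cPQ num
    unfolding T1_def[symmetric] T2_def[symmetric] D_def[symmetric] s2
    by (simp add: sum_divide_distrib sum.distrib add_divide_distrib)
qed

end
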